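(* Let $(X,d)$ be a separable complete metric space, $(\Omega,\mathsf{F},\mathbb{P})$ a probability space, and $\mathcal{F}$ a sub-$\sigma$-algebra of $\mathsf{F}$. Let $\phi:X\times X\to[0,\infty)$ be a Carath\'eodory distance and let $S\subseteq X$ be a non-empty Borel set. Then for every $\mathcal{F}$-measurable $X$-valued random variable $x$ and every $\varepsilon>0$ there exists an $\mathcal{F}$-measurable $X$-valued random variable $s$ such that $s\in S$ almost surely and $\mathbb{E}[\phi(s,x)]\le\mathbb{E}[\mathrm{dist}^\phi_S(x)]+\varepsilon$.
   Context: A Carath\'eodory distance is a function $\phi:X\times X\to[0,\infty)$ continuous in its left argument and Borel measurable in its right argument. $\mathrm{dist}^\phi_S(x):=\inf_{s\in S}\phi(s,x)$. *)

theory Defs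
  imports "HOL-Probability.Probability"
begin

definition caratheodory_distance :: "('a::topological_space \<Rightarrow> 'a \<Rightarrow> real) \<Rightarrow> bool" where
  "caratheodory_distance \<phi> \<longleftrightarrow>
     (\<forall>s y. 0 \<le> \<phi> s y) \<and>
     (\<forall>y. continuous_on UNIV (\<lambda>s. \<phi> s y)) \<and>
     (\<forall>s. (\<lambda>y. \<phi> s y) \<in> borel_measurable borel)"

definition dist_phi :: "('a \<Rightarrow> 'a \<Rightarrow> real) \<Rightarrow> 'a set \<Rightarrow> 'a \<Rightarrow> real" where
  "dist_phi \<phi> S x = (INF s\<in>S. \<phi> s x)"

end

theory Submission
  imports Defs
begin

theorem corollary2p11:
  fixes M F :: "'w measure"
    and \<phi> :: "'a::polish_space \<Rightarrow> 'a \<Rightarrow> real"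
    and S :: "'a set"
    and x :: "'w \<Rightarrow> 'a"
    and \<epsilon> :: real
  assumes "prob_space M"
    and "subalgebra M F"
    and "caratheodory_distance \<phi>"
    and "S \<in> sets borel" and "S \<noteq> {}"
    and "x \<in> borel_measurable F"
    and "\<epsilon> > 0"
  shows "\<exists>s \<in> borel_measurable F.
           (AE \<omega> in M. s \<omega> \<in> S) \<and>
           (\<integral>\<^sup>+ \<omega>. ennreal (\<phi> (s \<omega>) (x \<omega>)) \<partial>M)
             \<le> (\<integral>\<^sup>+ \<omega>. ennreal (dist_phi \<phi> S (x \<omega>)) \<partial>M) + ennreal \<epsilon>"
proof -
  have pos: "\<And>s y. 0 \<le> \<phi> s y" and cont: "\<And>y. continuous_on UNIV (\<lambda>s. \<phi> s y)"
    and meas: "\<And>s. (\<lambda>y. \<phi> s y) \<in> borel_measurable borel"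
    using assms(3) unfolding caratheodory_distance_def by auto
  obtain T where T: "countable T" "T \<subseteq> S" "S \<subseteq> closure T"
    using separable by blast
  have Tne: "T \<noteq> {}" using T assms(5) by auto
  have bddS: "\<And>y. bdd_below ((\<lambda>s. \<phi> s y) ` S)" using pos by (meson bdd_belowI2)
  have bddT: "\<And>y. bdd_below ((\<lambda>s. \<phi> s y) ` T)" using pos by (meson bdd_belowI2)
  have eq: "dist_phi \<phi> S y = (INF t\<in>T. \<phi> t y)" for y
  proof (rule antisym)
    show "dist_phi \<phi> S y \<le> (INF t\<in>T. \<phi> t y)"
      unfolding dist_phi_def by (rule cINF_superset_mono[OF Tne bddS T(2)]) simp
    have cl: "closed {z. (INF t\<in>T. \<phi> t y) \<le> \<phi> z y}"
      by (rule closed_Collect_le) (auto intro: cont)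
    have "T \<subseteq> {z. (INF t\<in>T. \<phi> t y) \<le> \<phi> z y}"
      using bddT by (auto intro: cINF_lower)
    hence "closure T \<subseteq> {z. (INF t\<in>T. \<phi> t y) \<le> \<phi> z y}"
      using cl by (rule closure_minimal)
    hence "\<And>s. s \<in> S \<Longrightarrow> (INF t\<in>T. \<phi> t y) \<le> \<phi> s y" using T(3) by auto
    thus "(INF t\<in>T. \<phi> t y) \<le> dist_phi \<phi> S y"
      unfolding dist_phi_def using assms(5) by (intro cINF_greatest) auto
  qed
  have gmeas: "(\<lambda>y. dist_phi \<phi> S y) \<in> borel_measurable borel"
    unfolding eq by (rule borel_measurable_cINF_real[OF T(1)]) (rule meas)
  define d where "d = from_nat_into T"
  have rd: "range d = T" unfolding d_def using range_from_nat_into[OF Tne T(1)] .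
  have ex: "\<exists>n. \<phi> (d n) y < dist_phi \<phi> S y + \<epsilon>" for y
  proof -
    have "(INF t\<in>T. \<phi> t y) < dist_phi \<phi> S y + \<epsilon>" using eq assms(7) by simp
    then obtain t where "t \<in> T" "\<phi> t y < dist_phi \<phi> S y + \<epsilon>"
      using cINF_less_iff[OF Tne bddT] by blast
    thus ?thesis using rd by auto
  qed
  define N where "N \<omega> = (LEAST n. \<phi> (d n) (x \<omega>) < dist_phi \<phi> S (x \<omega>) + \<epsilon>)" for \<omega>
  define s where "s \<omega> = d (N \<omega>)" for \<omega>
  have sle: "\<phi> (s \<omega>) (x \<omega>) < dist_phi \<phi> S (x \<omega>) + \<epsilon>" for \<omega>
    unfolding s_def N_def using ex by (rule LeastI_ex)
  have sS: "s \<omega> \<in> S" for \<omega> using rd T(2) unfolding s_def by auto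
  have m1[measurable]: "(\<lambda>\<omega>. \<phi> (d n) (x \<omega>)) \<in> borel_measurable F" for n
    using measurable_compose[OF assms(6) meas] .
  have m2[measurable]: "(\<lambda>\<omega>. dist_phi \<phi> S (x \<omega>)) \<in> borel_measurable F"
    using measurable_compose[OF assms(6) gmeas] .
  have Nm: "N \<in> measurable F (count_space UNIV)"
    unfolding N_def by measurable
  have sm: "s \<in> borel_measurable F"
    unfolding s_def using measurable_compose[OF Nm, of d borel] by simp
  have m2M: "(\<lambda>\<omega>. ennreal (dist_phi \<phi> S (x \<omega>))) \<in> borel_measurable M"
    using measurable_from_subalg[OF assms(2) m2] by simp
  interpret prob_space M by (rule assms(1))
  have "(\<integral>\<^sup>+ \<omega>. ennreal (\<phi> (s \<omega>) (x \<omega>)) \<partial>M)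
        \<le> (\<integral>\<^sup>+ \<omega>. ennreal (dist_phi \<phi> S (x \<omega>)) + ennreal \<epsilon> \<partial>M)"
  proof (rule nn_integral_mono)
    fix \<omega>
    have "0 \<le> dist_phi \<phi> S (x \<omega>)" unfolding dist_phi_def
      using assms(5) pos by (intro cINF_greatest) auto
    thus "ennreal (\<phi> (s \<omega>) (x \<omega>)) \<le> ennreal (dist_phi \<phi> S (x \<omega>)) + ennreal \<epsilon>"
      using sle[of \<omega>] assms(7) by (simp add: ennreal_plus[symmetric] del: ennreal_plus)
  qed
  also have "\<dots> = (\<integral>\<^sup>+ \<omega>. ennreal (dist_phi \<phi> S (x \<omega>)) \<partial>M) + ennreal \<epsilon>"
    by (subst nn_integral_add) (auto simp: m2M emeasure_space_1)
  finally show ?thesis using sm sS by blast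
qed

end
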